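(* For every $d\ge 1$, the set $X=(L_0\cup L_d)\setminus\{[0,11\cdots1],[d,11\cdots1]\}$ is a mutual-visibility set of $\mathit{BF}(d)$. In particular $\mu(\mathit{BF}(d))\ge 2^{d+1}-2$.
   Context: Binary strings $c=c_0\cdots c_{d-1}$ have positions $0,\dots,d-1$ from the left; $c(i)$ is $c$ with bit $i$ complemented. $\mathit{BF}(d)$ has vertex set $\{[\ell,c]:\ell\in\{0,\dots,d\},\ c\in\{0,1\}^d\}$; for $\ell\in\{0,\dots,d-1\}$, $[\ell,c]$ is adjacent to $[\ell+1,c']$ iff $c'=c$ or $c'=c(\ell)$, and there are no other edges. $L_j=\{[j,c]:c\in\{0,1\}^d\}$ is level $j$. For a connected graph $G$ and $X\subseteq V(G)$, two vertices $x,y$ are $X$-visible if some shortest $x,y$-path has no internal vertex in $X$; $X$ is a mutual-visibility set if every two vertices of $X$ are $X$-visible; $\mu(G)$ is the maximum size of a mutual-visibility set. *)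

theory Defs
  imports Main
begin

definition walk :: "'a set \<Rightarrow> ('a \<Rightarrow> 'a \<Rightarrow> bool) \<Rightarrow> 'a list \<Rightarrow> bool" where
  "walk V E p \<longleftrightarrow> p \<noteq> [] \<and> set p \<subseteq> V \<and> (\<forall>i. Suc i < length p \<longrightarrow> E (p ! i) (p ! Suc i))"

definition walk_betw :: "'a set \<Rightarrow> ('a \<Rightarrow> 'a \<Rightarrow> bool) \<Rightarrow> 'a \<Rightarrow> 'a list \<Rightarrow> 'a \<Rightarrow> bool" where
  "walk_betw V E x p y \<longleftrightarrow> walk V E p \<and> hd p = x \<and> last p = y"

definition gdist :: "'a set \<Rightarrow> ('a \<Rightarrow> 'a \<Rightarrow> bool) \<Rightarrow> 'a \<Rightarrow> 'a \<Rightarrow> nat" where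
  "gdist V E x y = (LEAST n. \<exists>p. walk_betw V E x p y \<and> length p - 1 = n)"

definition shortest_path :: "'a set \<Rightarrow> ('a \<Rightarrow> 'a \<Rightarrow> bool) \<Rightarrow> 'a \<Rightarrow> 'a list \<Rightarrow> 'a \<Rightarrow> bool" where
  "shortest_path V E x p y \<longleftrightarrow> walk_betw V E x p y \<and> length p - 1 = gdist V E x y"

definition internal :: "'a list \<Rightarrow> 'a set" where
  "internal p = set (butlast (tl p))"

definition X_visible :: "'a set \<Rightarrow> ('a \<Rightarrow> 'a \<Rightarrow> bool) \<Rightarrow> 'a set \<Rightarrow> 'a \<Rightarrow> 'a \<Rightarrow> bool" where
  "X_visible V E X x y \<longleftrightarrow> (\<exists>p. shortest_path V E x p y \<and> internal p \<inter> X = {})"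

definition mutual_visibility_set :: "'a set \<Rightarrow> ('a \<Rightarrow> 'a \<Rightarrow> bool) \<Rightarrow> 'a set \<Rightarrow> bool" where
  "mutual_visibility_set V E X \<longleftrightarrow> X \<subseteq> V \<and> (\<forall>x\<in>X. \<forall>y\<in>X. X_visible V E X x y)"

text \<open>Mutual-visibility number (for finite graphs).\<close>
definition mu :: "'a set \<Rightarrow> ('a \<Rightarrow> 'a \<Rightarrow> bool) \<Rightarrow> nat" where
  "mu V E = Max {card X | X. mutual_visibility_set V E X}"

text \<open>Vertex [l,c] is the pair (l, c) with c a bool list of length d (True = bit 1);
  position i of c is c ! i.\<close>

definition flip :: "bool list \<Rightarrow> nat \<Rightarrow> bool list" where
  "flip c i = c[i := \<not> c ! i]"

definition BF_V :: "nat \<Rightarrow> (nat \<times> bool list) set" where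
  "BF_V d = {(l, c). l \<le> d \<and> length c = d}"

definition BF_up :: "nat \<Rightarrow> nat \<times> bool list \<Rightarrow> nat \<times> bool list \<Rightarrow> bool" where
  "BF_up d u v \<longleftrightarrow> u \<in> BF_V d \<and> v \<in> BF_V d \<and> fst u < d \<and> fst v = fst u + 1
      \<and> (snd v = snd u \<or> snd v = flip (snd u) (fst u))"

definition BF_E :: "nat \<Rightarrow> nat \<times> bool list \<Rightarrow> nat \<times> bool list \<Rightarrow> bool" where
  "BF_E d u v \<longleftrightarrow> BF_up d u v \<or> BF_up d v u"

definition level :: "nat \<Rightarrow> nat \<Rightarrow> (nat \<times> bool list) set" where
  "level d j = {(j, c) | c. length c = d}"

end

theory Submission
  imports Defs
begin


definition mix :: "nat \<Rightarrow> (nat \<Rightarrow> bool) \<Rightarrow> (nat \<Rightarrow> bool) \<Rightarrow> nat \<Rightarrow> bool list" where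
  "mix d P Q l = map (\<lambda>j. if j < l then P j else Q j) [0..<d]"

lemma length_mix[simp]: "length (mix d P Q l) = d"
  by (simp add: mix_def)

lemma mix_Suc: "l < d \<Longrightarrow> mix d P Q (Suc l) = (mix d P Q l)[l := P l]"
  by (rule nth_equalityI) (auto simp: mix_def nth_list_update)

lemma mix_0: "length a = d \<Longrightarrow> mix d P (nth a) 0 = a"
  by (rule nth_equalityI) (auto simp: mix_def)

lemma mix_d: "length a = d \<Longrightarrow> mix d (nth a) Q d = a"
  by (rule nth_equalityI) (auto simp: mix_def)

lemma mix_d_True: "mix d (\<lambda>_. True) Q d = replicate d True"
  by (rule nth_equalityI) (auto simp: mix_def)

lemma mix_0_True: "mix d P (\<lambda>_. True) 0 = replicate d True"
  by (rule nth_equalityI) (auto simp: mix_def)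

lemma upd_flip: "l < length c \<Longrightarrow> c[l := v] = c \<or> c[l := v] = flip c l"
  by (cases "v = c ! l") (auto simp: flip_def)

lemma BF_up_mix: "l < d \<Longrightarrow> BF_up d (l, mix d P Q l) (Suc l, mix d P Q (Suc l))"
  using upd_flip[of l "mix d P Q l" "P l"]
  by (auto simp: BF_up_def BF_V_def mix_Suc)

lemma BF_E_sym: "BF_E d u v = BF_E d v u"
  by (auto simp: BF_E_def)

lemma BF_E_level: "BF_E d u v \<Longrightarrow> fst v = Suc (fst u) \<or> fst u = Suc (fst v)"
  by (auto simp: BF_E_def BF_up_def)

lemma BF_E_bit:
  assumes "BF_E d u v" "k < d" "snd v ! k \<noteq> snd u ! k"
  shows "(fst u = k \<and> fst v = Suc k) \<or> (fst u = Suc k \<and> fst v = k)"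
  using assms by (auto simp: BF_E_def BF_up_def BF_V_def flip_def nth_list_update split: if_splits)

lemma walk_level:
  assumes "walk (BF_V d) (BF_E d) q"
  shows "i + n < length q \<Longrightarrow> fst (q!(i+n)) \<le> fst (q!i) + n \<and> fst (q!i) \<le> fst (q!(i+n)) + n"
proof (induction n)
  case 0 then show ?case by simp
next
  case (Suc n)
  then have "BF_E d (q!(i+n)) (q!Suc(i+n))" using assms by (auto simp: walk_def)
  then have "fst (q!Suc(i+n)) = Suc (fst (q!(i+n))) \<or> fst (q!(i+n)) = Suc (fst (q!Suc(i+n)))"
    by (rule BF_E_level)
  then show ?case using Suc by auto
qed

lemma walk_level2:
  assumes "walk (BF_V d) (BF_E d) q" "i \<le> j" "j < length q"
  shows "fst (q!j) \<le> fst (q!i) + (j - i) \<and> fst (q!i) \<le> fst (q!j) + (j - i)"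
  using walk_level[OF assms(1), of i "j - i"] assms by simp

lemma walk_bit:
  assumes "walk (BF_V d) (BF_E d) q" "k < d"
  shows "i < length q \<Longrightarrow> snd (q!i) ! k \<noteq> snd (q!0) ! k \<Longrightarrow>
     \<exists>j. Suc j < length q \<and> ((fst (q!j) = k \<and> fst (q!Suc j) = Suc k) \<or> (fst (q!j) = Suc k \<and> fst (q!Suc j) = k))"
proof (induction i)
  case 0 then show ?case by simp
next
  case (Suc i)
  show ?case
  proof (cases "snd (q!i) ! k \<noteq> snd (q!0) ! k")
    case True then show ?thesis using Suc by auto
  next
    case False
    have e: "BF_E d (q!i) (q!Suc i)" using assms Suc by (auto simp: walk_def)
    have "snd (q!Suc i) ! k \<noteq> snd (q!i) ! k" using False Suc by auto
    from BF_E_bit[OF e assms(2) this] show ?thesis using Suc(2) by blast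
  qed
qed

lemma walk_bit_level:
  assumes "walk (BF_V d) (BF_E d) q" "k < d" "snd (last q) ! k \<noteq> snd (hd q) ! k"
  shows "\<exists>i<length q. fst (q!i) = k" "\<exists>i<length q. fst (q!i) = Suc k"
proof -
  have ne: "q \<noteq> []" using assms by (auto simp: walk_def)
  have "snd (q!(length q - 1)) ! k \<noteq> snd (q!0) ! k"
    using assms(3) ne by (simp add: last_conv_nth hd_conv_nth)
  from walk_bit[OF assms(1,2) _ this] ne obtain j where
    "Suc j < length q" "(fst (q!j) = k \<and> fst (q!Suc j) = Suc k) \<or> (fst (q!j) = Suc k \<and> fst (q!Suc j) = k)"
    by auto
  then show "\<exists>i<length q. fst (q!i) = k" "\<exists>i<length q. fst (q!i) = Suc k"
    by (metis Suc_lessD)+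
qed

lemma butlast_upt': "butlast [m..<n] = [m..<n-1]"
  by (cases n) auto

lemma vis_from_fun:
  fixes g :: "nat \<Rightarrow> 'a"
  assumes "n \<ge> 1" "\<forall>i<n. g i \<in> V" "\<forall>i. Suc i < n \<longrightarrow> E (g i) (g (Suc i))" "g 0 = x" "g (n-1) = y"
    "\<forall>q. walk_betw V E x q y \<longrightarrow> n \<le> length q"
    "\<forall>i. 1 \<le> i \<and> i < n - 1 \<longrightarrow> g i \<notin> X"
  shows "X_visible V E X x y"
proof -
  define p where "p = map g [0..<n]"
  have lp: "length p = n" by (simp add: p_def)
  have w: "walk_betw V E x p y"
    using assms unfolding walk_betw_def walk_def p_def
    by (auto simp: hd_map last_map)
  have "gdist V E x y = n - 1"
    unfolding gdist_def
  proof (rule Least_equality)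
    show "\<exists>p. walk_betw V E x p y \<and> length p - 1 = n - 1" using w lp by auto
  next
    fix m assume "\<exists>p. walk_betw V E x p y \<and> length p - 1 = m"
    then show "n - 1 \<le> m" using assms(6) by force
  qed
  then have sp: "shortest_path V E x p y" using w lp by (simp add: shortest_path_def)
  have "internal p = g ` {1..<n-1}"
    proof -
    have "butlast (tl (map g [0..<n])) = map g [1..<n-1]"
      by (simp add: map_tl[symmetric] map_butlast[symmetric] tl_upt butlast_upt')
    then show ?thesis by (simp add: internal_def p_def)
  qed
  then have "internal p \<inter> X = {}" using assms(7) by auto
  then show ?thesis using sp by (auto simp: X_visible_def)
qed



definition goodX :: "nat \<Rightarrow> (nat \<times> bool list) set \<Rightarrow> bool" where
  "goodX d X \<longleftrightarrow> (\<forall>v\<in>X. (fst v = 0 \<or> fst v = d) \<and> v \<noteq> (0, replicate d True) \<and> v \<noteq> (d, replicate d True))"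

lemma walk_ends:
  assumes "walk_betw V E x q y"
  shows "q \<noteq> []" "q!0 = x" "q!(length q - 1) = y"
  using assms by (auto simp: walk_betw_def walk_def hd_conv_nth last_conv_nth)

lemma vis_0_d:
  assumes "length a = d" "length b = d" "goodX d X"
  shows "X_visible (BF_V d) (BF_E d) X (0,a) (d,b)"
proof (rule vis_from_fun[where g="\<lambda>i. (i, mix d (nth b) (nth a) i)" and n="d+1"])
  show "\<forall>q. walk_betw (BF_V d) (BF_E d) (0, a) q (d, b) \<longrightarrow> d + 1 \<le> length q"
  proof (intro allI impI)
    fix q assume w: "walk_betw (BF_V d) (BF_E d) (0, a) q (d, b)"
    note e = walk_ends[OF w]
    have "walk (BF_V d) (BF_E d) q" using w by (simp add: walk_betw_def)
    from walk_level2[OF this, of 0 "length q - 1"] e have "d \<le> length q - 1" by auto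
    then show "d + 1 \<le> length q" using e(1) by (cases q) auto
  qed
qed (use assms in \<open>auto simp: BF_V_def mix_0 mix_d BF_E_def BF_up_mix goodX_def\<close>)

lemma vis_d_0:
  assumes "length a = d" "length b = d" "goodX d X"
  shows "X_visible (BF_V d) (BF_E d) X (d,a) (0,b)"
proof (rule vis_from_fun[where g="\<lambda>i. (d - i, mix d (nth a) (nth b) (d - i))" and n="d+1"])
  show "\<forall>q. walk_betw (BF_V d) (BF_E d) (d, a) q (0, b) \<longrightarrow> d + 1 \<le> length q"
  proof (intro allI impI)
    fix q assume w: "walk_betw (BF_V d) (BF_E d) (d, a) q (0, b)"
    note e = walk_ends[OF w]
    have "walk (BF_V d) (BF_E d) q" using w by (simp add: walk_betw_def)
    from walk_level2[OF this, of 0 "length q - 1"] e have "d \<le> length q - 1" by auto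
    then show "d + 1 \<le> length q" using e(1) by (cases q) auto
  qed
next
  show "\<forall>i. Suc i < d + 1 \<longrightarrow> BF_E d (d - i, mix d (nth a) (nth b) (d - i)) (d - Suc i, mix d (nth a) (nth b) (d - Suc i))"
  proof (intro allI impI)
    fix i assume "Suc i < d + 1"
    then have "d - i = Suc (d - Suc i)" "d - Suc i < d" by auto
    then show "BF_E d (d - i, mix d (nth a) (nth b) (d - i)) (d - Suc i, mix d (nth a) (nth b) (d - Suc i))"
      using BF_up_mix[of "d - Suc i" d "nth a" "nth b"] by (simp add: BF_E_def)
  qed
qed (use assms in \<open>auto simp: BF_V_def mix_0 mix_d goodX_def\<close>)



lemma vis_0_0:
  assumes "length a = d" "length b = d" "goodX d X" "k < d" "a!k \<noteq> b!k"
    "\<forall>j. k < j \<and> j < d \<longrightarrow> a!j = b!j"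
  shows "X_visible (BF_V d) (BF_E d) X (0,a) (0,b)"
proof -
  define m where "m = Suc k"
  define A where "A = mix d (\<lambda>_. True) (nth a)"
  define B where "B = mix d (\<lambda>_. True) (nth b)"
  define g where "g i = (if i \<le> m then (i, A i) else (2*m - i, B (2*m - i)))" for i
  have AB: "A m = B m" unfolding A_def B_def m_def mix_def using assms(6) by auto
  have md: "m \<le> d" using assms(4) m_def by simp
  show ?thesis
  proof (rule vis_from_fun[where g=g and n="2*m+1"])
    show "g 0 = (0, a)" using assms by (simp add: g_def A_def mix_0)
    show "g (2*m+1-1) = (0, b)" using assms by (simp add: g_def B_def mix_0 m_def)
    show "\<forall>i<2*m+1. g i \<in> BF_V d" using md by (auto simp: g_def BF_V_def A_def B_def)
    show "\<forall>i. Suc i < 2*m+1 \<longrightarrow> BF_E d (g i) (g (Suc i))"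
    proof (intro allI impI)
      fix i assume i: "Suc i < 2*m+1"
      show "BF_E d (g i) (g (Suc i))"
      proof (cases "i < m")
        case True
        then show ?thesis using md BF_up_mix[of i d "\<lambda>_. True" "nth a"]
          by (auto simp: g_def A_def BF_E_def)
      next
        case False
        define l where "l = 2*m - Suc i"
        have l: "Suc l = 2*m - i" "l < d" "g (Suc i) = (l, B l)" using False i md
          by (auto simp: l_def g_def)
        have "g i = (Suc l, B (Suc l))" using False AB l(1) by (auto simp: g_def)
        then show ?thesis using l BF_up_mix[of l d "\<lambda>_. True" "nth b"]
          by (auto simp: B_def BF_E_def)
      qed
    qed
    show "\<forall>q. walk_betw (BF_V d) (BF_E d) (0, a) q (0, b) \<longrightarrow> 2*m+1 \<le> length q"
    proof (intro allI impI)
      fix q assume w: "walk_betw (BF_V d) (BF_E d) (0, a) q (0, b)"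
      note e = walk_ends[OF w]
      have wq: "walk (BF_V d) (BF_E d) q" using w by (simp add: walk_betw_def)
      have "snd (last q) ! k \<noteq> snd (hd q) ! k" using e assms(5)
        by (simp add: hd_conv_nth last_conv_nth)
      from walk_bit_level(2)[OF wq assms(4) this] obtain i where
        i: "i < length q" "fst (q!i) = m" by (auto simp: m_def)
      from walk_level2[OF wq, of 0 i] i e have 1: "m \<le> i" by auto
      from walk_level2[OF wq, of i "length q - 1"] i e have 2: "m \<le> length q - 1 - i" by auto
      from 1 2 i(1) show "2*m+1 \<le> length q" by linarith
    qed
    show "\<forall>i. 1 \<le> i \<and> i < 2*m+1 - 1 \<longrightarrow> g i \<notin> X"
    proof (intro allI impI)
      fix i assume i: "1 \<le> i \<and> i < 2*m+1 - 1"
      show "g i \<notin> X"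
      proof
        assume gX: "g i \<in> X"
        have "fst (g i) \<noteq> 0" using i by (auto simp: g_def)
        then have "fst (g i) = d" using gX assms(3) by (auto simp: goodX_def)
        then have "i = m" "m = d" using md i by (auto simp: g_def split: if_splits)
        then have "g i = (d, replicate d True)" by (simp add: g_def A_def mix_d_True)
        then show False using gX assms(3) by (auto simp: goodX_def)
      qed
    qed
  qed simp
qed

lemma vis_d_d:
  assumes "length a = d" "length b = d" "goodX d X" "k < d" "a!k \<noteq> b!k"
    "\<forall>j. j < k \<longrightarrow> a!j = b!j"
  shows "X_visible (BF_V d) (BF_E d) X (d,a) (d,b)"
proof -
  define m where "m = d - k"
  define A where "A = mix d (nth a) (\<lambda>_. True)"
  define B where "B = mix d (nth b) (\<lambda>_. True)"
  define g where "g i = (if i \<le> m then (d - i, A (d - i)) else (k + (i - m), B (k + (i - m))))" for i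
  have AB: "A k = B k" unfolding A_def B_def mix_def using assms(6) by auto
  have md: "m \<le> d" "k + m = d" "m \<ge> 1" using assms(4) m_def by auto
  show ?thesis
  proof (rule vis_from_fun[where g=g and n="2*m+1"])
    show "g 0 = (d, a)" using assms by (simp add: g_def A_def mix_d)
    show "g (2*m+1-1) = (d, b)" using assms md by (simp add: g_def B_def mix_d)
    show "\<forall>i<2*m+1. g i \<in> BF_V d" using md by (auto simp: g_def BF_V_def A_def B_def)
    show "\<forall>i. Suc i < 2*m+1 \<longrightarrow> BF_E d (g i) (g (Suc i))"
    proof (intro allI impI)
      fix i assume i: "Suc i < 2*m+1"
      show "BF_E d (g i) (g (Suc i))"
      proof (cases "i < m")
        case True
        define l where "l = d - Suc i"
        have l1: "Suc l = d - i" using True md by (simp add: l_def)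
        have l: "Suc l = d - i" "l < d" "g (Suc i) = (l, A l)" "g i = (Suc l, A (Suc l))"
          using True md l1 by (auto simp: l_def g_def)
        then show ?thesis using BF_up_mix[of l d "nth a" "\<lambda>_. True"]
          by (auto simp: A_def BF_E_def)
      next
        case False
        define l where "l = k + (i - m)"
        have l1: "Suc l = k + (Suc i - m)" using False by (simp add: l_def)
        have l: "Suc l = k + (Suc i - m)" "l < d" "g (Suc i) = (Suc l, B (Suc l))" using False i md l1
          by (auto simp: l_def g_def)
        have "g i = (l, B l)" using False AB md by (auto simp: g_def l_def)
        then show ?thesis using l BF_up_mix[of l d "nth b" "\<lambda>_. True"]
          by (auto simp: B_def BF_E_def)
      qed
    qed
    show "\<forall>q. walk_betw (BF_V d) (BF_E d) (d, a) q (d, b) \<longrightarrow> 2*m+1 \<le> length q"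
    proof (intro allI impI)
      fix q assume w: "walk_betw (BF_V d) (BF_E d) (d, a) q (d, b)"
      note e = walk_ends[OF w]
      have wq: "walk (BF_V d) (BF_E d) q" using w by (simp add: walk_betw_def)
      have "snd (last q) ! k \<noteq> snd (hd q) ! k" using e assms(5)
        by (simp add: hd_conv_nth last_conv_nth)
      from walk_bit_level(1)[OF wq assms(4) this] obtain i where
        i: "i < length q" "fst (q!i) = k" by auto
      from walk_level2[OF wq, of 0 i] i e md have 1: "m \<le> i" by auto
      have "fst (q!(length q - 1)) \<le> fst (q!i) + (length q - 1 - i)"
        using walk_level2[OF wq, of i "length q - 1"] i by auto
      then have 2: "m \<le> length q - 1 - i" using i e md by simp
      from 1 2 i(1) show "2*m+1 \<le> length q" by linarith
    qed
    show "\<forall>i. 1 \<le> i \<and> i < 2*m+1 - 1 \<longrightarrow> g i \<notin> X"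
    proof (intro allI impI)
      fix i assume i: "1 \<le> i \<and> i < 2*m+1 - 1"
      show "g i \<notin> X"
      proof
        assume gX: "g i \<in> X"
        have "fst (g i) \<noteq> d" using i md by (auto simp: g_def)
        then have "fst (g i) = 0" using gX assms(3) by (auto simp: goodX_def)
        then have "i = m" "k = 0" using md i by (auto simp: g_def split: if_splits)
        then have "g i = (0, replicate d True)" using md by (simp add: g_def A_def mix_0_True)
        then show False using gX assms(3) by (auto simp: goodX_def)
      qed
    qed
  qed simp
qed



lemma vis_refl: "x \<in> V \<Longrightarrow> X_visible V E X x x"
  by (rule vis_from_fun[where g="\<lambda>_. x" and n=1]) (auto simp: walk_betw_def walk_def Suc_le_eq)

lemma diff_idx:
  assumes "length a = d" "length b = d" "a \<noteq> b"
  shows "\<exists>k<d. a!k \<noteq> b!k \<and> (\<forall>j. k < j \<and> j < d \<longrightarrow> a!j = b!j)"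
        "\<exists>k<d. a!k \<noteq> b!k \<and> (\<forall>j. j < k \<longrightarrow> a!j = b!j)"
proof -
  let ?K = "{j. j < d \<and> a!j \<noteq> b!j}"
  have ne: "?K \<noteq> {}" using assms nth_equalityI[of a b] by auto
  have f: "finite ?K" by auto
  have m1: "Max ?K \<in> ?K" using Max_in[OF f ne] .
  have m2: "\<forall>j. Max ?K < j \<and> j < d \<longrightarrow> a!j = b!j"
  proof (intro allI impI)
    fix j assume j: "Max ?K < j \<and> j < d"
    show "a!j = b!j"
    proof (rule ccontr)
      assume "a!j \<noteq> b!j"
      then have "j \<le> Max ?K" using j by (intro Max_ge[OF f]) simp
      then show False using j by simp
    qed
  qed
  show "\<exists>k<d. a!k \<noteq> b!k \<and> (\<forall>j. k < j \<and> j < d \<longrightarrow> a!j = b!j)"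
    using m1 m2 by blast
  have n1: "Min ?K \<in> ?K" using Min_in[OF f ne] .
  have n2: "\<forall>j. j < Min ?K \<longrightarrow> a!j = b!j"
  proof (intro allI impI)
    fix j assume j: "j < Min ?K"
    show "a!j = b!j"
    proof (rule ccontr)
      assume "a!j \<noteq> b!j"
      moreover have "j < d" using j n1 by simp
      ultimately have "Min ?K \<le> j" by (intro Min_le[OF f]) simp
      then show False using j by simp
    qed
  qed
  show "\<exists>k<d. a!k \<noteq> b!k \<and> (\<forall>j. j < k \<longrightarrow> a!j = b!j)"
    using n1 n2 by blast
qed

lemma card_boollists: "card {c :: bool list. length c = d} = 2 ^ d"
  using card_lists_length_eq[of "UNIV :: bool set" d] by simp

lemma card_level: "card (level d j) = 2 ^ d"
proof -
  have "level d j = (\<lambda>c. (j, c)) ` {c. length c = d}" by (auto simp: level_def)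
  moreover have "inj_on (\<lambda>c. (j, c :: bool list)) {c. length c = d}" by (auto simp: inj_on_def)
  ultimately show ?thesis using card_image card_boollists by metis
qed

lemma finite_level: "finite (level d j)"
  using card_level[of d j] card.infinite by fastforce

lemma finite_BF_V: "finite (BF_V d)"
proof -
  have "BF_V d \<subseteq> {0..d} \<times> {c. set c \<subseteq> UNIV \<and> length c = d}" by (auto simp: BF_V_def)
  moreover have "finite ({0..d} \<times> {c :: bool list. set c \<subseteq> UNIV \<and> length c = d})"
    by (intro finite_cartesian_product finite_lists_length_eq) auto
  ultimately show ?thesis by (rule finite_subset)
qed


lemma s0: "(a, c) \<in> level d j \<longleftrightarrow> a = j \<and> length c = d"
  unfolding level_def by blast
lemma s1: assumes "d \<ge> 1"
 shows "(level d 0 \<union> level d d) - {(0, replicate d True), (d, replicate d True)} = (level d 0 - {(0, replicate d True)}) \<union> (level d d - {(d, replicate d True)})"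
proof -
  have "(d, replicate d True) \<notin> level d 0" "(0, replicate d True) \<notin> level d d"
    using assms by (simp_all add: s0)
  then show ?thesis by blast
qed
lemma s2: assumes "d \<ge> 1" shows "(level d 0 - {(0, replicate d True)}) \<inter> (level d d - {(d, replicate d True)}) = {}"
      using assms by (auto simp: s0)
lemma s3: "card (level d j - {(j, replicate d True)}) = 2 ^ d - 1"
proof -
  have "(j, replicate d True) \<in> level d j" unfolding level_def by simp
  then show ?thesis by (simp add: card_Diff_singleton finite_level card_level)
qed
lemma s4: "(2::nat) ^ d - 1 + (2 ^ d - 1) = 2 ^ (d + 1) - 2"
proof -
  have "(2::nat) ^ d \<ge> 1" by simp
  then show ?thesis by simp
qed
theorem lemma5p2:
  fixes d :: nat
  assumes "d \<ge> 1"
  defines "X \<equiv> (level d 0 \<union> level d d) - {(0, replicate d True), (d, replicate d True)}"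
  shows "mutual_visibility_set (BF_V d) (BF_E d) X \<and> 2 ^ (d + 1) - 2 \<le> mu (BF_V d) (BF_E d)"
proof -
  have g: "goodX d X" using assms(1) unfolding goodX_def X_def level_def by auto
  have XV: "X \<subseteq> BF_V d" unfolding X_def level_def BF_V_def by auto
  have mv: "mutual_visibility_set (BF_V d) (BF_E d) X"
    unfolding mutual_visibility_set_def
  proof (intro conjI XV ballI)
    fix x y assume x: "x \<in> X" and y: "y \<in> X"
    obtain lx a where xa0: "x = (lx, a)" by (cases x)
    have "x \<in> level d 0 \<union> level d d" using x unfolding X_def by blast
    then have xa: "x = (lx, a)" "length a = d" "lx = 0 \<or> lx = d" using xa0 by (auto simp: s0)
    obtain ly b where yb0: "y = (ly, b)" by (cases y)
    have "y \<in> level d 0 \<union> level d d" using y unfolding X_def by blast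
    then have yb: "y = (ly, b)" "length b = d" "ly = 0 \<or> ly = d" using yb0 by (auto simp: s0)
    show "X_visible (BF_V d) (BF_E d) X x y"
    proof (cases "x = y")
      case True then show ?thesis using vis_refl[of x "BF_V d" "BF_E d" X] XV x by blast
    next
      case False
      show ?thesis
      proof (cases "lx = ly")
        case True
        then have ab: "a \<noteq> b" using False xa yb by auto
        show ?thesis
        proof (cases "lx = 0")
          case True
          obtain k where "k < d" "a!k \<noteq> b!k" "\<forall>j. k < j \<and> j < d \<longrightarrow> a!j = b!j"
            using diff_idx(1)[OF xa(2) yb(2) ab] by auto
          then have "X_visible (BF_V d) (BF_E d) X (0,a) (0,b)" by (rule vis_0_0[OF xa(2) yb(2) g])
          then show ?thesis using True \<open>lx = ly\<close> xa(1) yb(1) by simp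
        next
          case False
          obtain k where "k < d" "a!k \<noteq> b!k" "\<forall>j. j < k \<longrightarrow> a!j = b!j"
            using diff_idx(2)[OF xa(2) yb(2) ab] by auto
          then have "X_visible (BF_V d) (BF_E d) X (d,a) (d,b)" by (rule vis_d_d[OF xa(2) yb(2) g])
          then show ?thesis using False \<open>lx = ly\<close> xa(1,3) yb(1) by simp
        qed
      next
        case False
        then have "(lx = 0 \<and> ly = d) \<or> (lx = d \<and> ly = 0)" using xa(3) yb(3) by auto
        then show ?thesis
        proof
          assume "lx = 0 \<and> ly = d" then show ?thesis using vis_0_d[OF xa(2) yb(2) g] xa(1) yb(1) by simp
        next
          assume "lx = d \<and> ly = 0" then show ?thesis using vis_d_0[OF xa(2) yb(2) g] xa(1) yb(1) by simp
        qed
      qed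
    qed
  qed
  have cX: "card X = 2 ^ (d + 1) - 2"
    unfolding X_def using s1[OF assms(1)] s2[OF assms(1)] s3[of d 0] s3[of d d] s4[of d]
      card_Un_disjoint[of "level d 0 - {(0, replicate d True)}" "level d d - {(d, replicate d True)}"]
      finite_level by simp
  have fin: "finite {card Y | Y. mutual_visibility_set (BF_V d) (BF_E d) Y}"
  proof -
    have sub: "{card Y | Y. mutual_visibility_set (BF_V d) (BF_E d) Y} \<subseteq> card ` Pow (BF_V d)"
      unfolding mutual_visibility_set_def by blast
    have "finite (card ` Pow (BF_V d))" using finite_BF_V by simp
    then show ?thesis by (rule finite_subset[OF sub])
  qed
  have "card X \<le> mu (BF_V d) (BF_E d)"
    unfolding mu_def using mv by (intro Max_ge[OF fin]) blast
  then show ?thesis using mv cX by simp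
qed


end
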